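(* Let $\rho_0>0$, $n\in\mathbb{N}$, $y_0\in\mathbb{R}^n$, and let $f:\mathbb{R}_{>0}\times\mathbb{C}^n\to\mathbb{C}^n$ be continuous. Assume there is $c\geq0$ such that $|f(t,y_1)-f(t,y_2)|\leq c|y_1-y_2|$ for all $y_1,y_2\in\mathbb{C}^n$ and $t>0$, and that $(t\mapsto f(t,0))\in L^2_{\rho_0}(\mathbb{R}_{>0};\mathbb{C}^n)$. Define $\tilde f:\mathbb{R}\times\mathbb{C}^n\to\mathbb{C}^n$ by $\tilde f(t,y):=f(t,y)$ if $t>0$ and $\tilde f(t,y):=0$ otherwise. Then the mapping $F:C_c^\infty(\mathbb{R};\mathbb{C}^n)\to C(\mathbb{R};\mathbb{C}^n)$, $F(\varphi)(t):=\tilde f(t,\varphi(t)+y_0)$, is eventually $(0,0)$-Lipschitz continuous.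
   Context: For $\rho\in\mathbb{R}$, $L^2_\rho(\mathbb{R};\mathbb{C}^n)$ is the space of measurable $g$ with $\int|g(t)|^2e^{-2\rho t}dt<\infty$ (similarly on $\mathbb{R}_{>0}$); this coincides with the space $H^0_\rho(\mathbb{R};\mathbb{C}^n)$ with norm $\|\cdot\|_{\rho,0}=\|\cdot\|_{L^2_\rho}$. Definition: a map $F$ defined on a domain containing $C_c^\infty(\mathbb{R};\mathbb{C}^n)$ is eventually $(0,0)$-Lipschitz continuous if there is $\nu\geq\rho_0$ such that for each $\rho\geq\nu$, $F$ takes values in $L^2_\rho(\mathbb{R};\mathbb{C}^n)$ and has a Lipschitz continuous extension $F_\rho:L^2_\rho(\mathbb{R};\mathbb{C}^n)\to L^2_\rho(\mathbb{R};\mathbb{C}^n)$ with $\sup_{\rho\geq\nu}|F_\rho|_{\mathrm{Lip}}<\infty$. *)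

theory Defs
  imports "HOL-Analysis.Analysis"
begin

definition vderiv :: "(real \<Rightarrow> 'a::real_normed_vector) \<Rightarrow> real \<Rightarrow> 'a" where
  "vderiv g = (\<lambda>t. vector_derivative g (at t))"

definition Cc_inf :: "(real \<Rightarrow> 'a::real_normed_vector) set" where
  "Cc_inf = {\<phi>. (\<forall>k t. (vderiv ^^ k) \<phi> differentiable (at t))
               \<and> compact (closure {t. \<phi> t \<noteq> 0})}"

definition L2w :: "real \<Rightarrow> (real \<Rightarrow> 'a::{real_normed_vector,second_countable_topology}) set" where
  "L2w \<rho> = {g. g \<in> borel_measurable lborel
               \<and> integrable lborel (\<lambda>t. (norm (g t))\<^sup>2 * exp (-2 * \<rho> * t))}"

definition L2w_pos :: "real \<Rightarrow> (real \<Rightarrow> 'a::{real_normed_vector,second_countable_topology}) set" where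
  "L2w_pos \<rho> = {g. set_borel_measurable lborel {0<..} g
               \<and> set_integrable lborel {0<..} (\<lambda>t. (norm (g t))\<^sup>2 * exp (-2 * \<rho> * t))}"

definition L2w_norm :: "real \<Rightarrow> (real \<Rightarrow> 'a::real_normed_vector) \<Rightarrow> real" where
  "L2w_norm \<rho> g = sqrt (\<integral>t. (norm (g t))\<^sup>2 * exp (-2 * \<rho> * t) \<partial>lborel)"

text \<open>Elements of L^2_rho
  are represented by functions; the extension F_rho agrees with F on C_c^infinity as
  elements of L^2_rho, i.e. almost everywhere.\<close>
definition eventually_Lip00 ::
  "real \<Rightarrow> ((real \<Rightarrow> 'a::{real_normed_vector,second_countable_topology}) \<Rightarrow> (real \<Rightarrow> 'a)) \<Rightarrow> bool" where
  "eventually_Lip00 \<rho>\<^sub>0 F \<longleftrightarrow>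
     (\<exists>\<nu> \<ge> \<rho>\<^sub>0. \<exists>L::real. \<forall>\<rho> \<ge> \<nu>.
        (\<forall>\<phi> \<in> Cc_inf. F \<phi> \<in> L2w \<rho>) \<and>
        (\<exists>F\<rho>. (\<forall>g \<in> L2w \<rho>. F\<rho> g \<in> L2w \<rho>)
             \<and> (\<forall>\<phi> \<in> Cc_inf. AE t in lborel. F\<rho> \<phi> t = F \<phi> t)
             \<and> (\<forall>g \<in> L2w \<rho>. \<forall>h \<in> L2w \<rho>.
                   L2w_norm \<rho> (\<lambda>t. F\<rho> g t - F\<rho> h t) \<le> L * L2w_norm \<rho> (\<lambda>t. g t - h t))))"

end

theory Submission
  imports Defs
begin

lemma sq2: "((a::real) + b)\<^sup>2 \<le> 2 * a\<^sup>2 + 2 * b\<^sup>2"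
  using zero_le_square[of "a-b"] by (simp add: power2_eq_square algebra_simps)

lemma sq3: "((a::real) + b + d)\<^sup>2 \<le> 3 * a\<^sup>2 + 3 * b\<^sup>2 + 3 * d\<^sup>2"
  using zero_le_square[of "a-b"] zero_le_square[of "a-d"] zero_le_square[of "b-d"]
  by (simp add: power2_eq_square algebra_simps)

lemma exp_weight_int:
  assumes "(r::real) > 0"
  shows "integrable lborel (\<lambda>t. indicator {0<..} t * exp (-2 * r * t))"
proof -
  have "integrable lebesgue (\<lambda>x. indicat_real {0..} x *\<^sub>R exp (- (2*r) * x))"
    using assms
    by (intro nonnegative_absolutely_integrable_1 [unfolded set_integrable_def] integrable_on_exp_minus_to_infinity) auto
  then have "integrable lborel (\<lambda>x. indicat_real {0..} x *\<^sub>R exp (- (2*r) * x))"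
    by (subst (asm) integrable_completion) auto
  then show ?thesis
    by (rule Bochner_Integration.integrable_bound) (auto simp: indicator_def)
qed

lemma L2w_diff:
  fixes g h :: "real \<Rightarrow> 'a::{real_normed_vector,second_countable_topology}"
  assumes "g \<in> L2w r" "h \<in> L2w r"
  shows "(\<lambda>t. g t - h t) \<in> L2w r"
proof -
  have gm: "g \<in> borel_measurable lborel" and hm: "h \<in> borel_measurable lborel"
   and gi: "integrable lborel (\<lambda>t. (norm (g t))\<^sup>2 * exp (-2 * r * t))"
   and hi: "integrable lborel (\<lambda>t. (norm (h t))\<^sup>2 * exp (-2 * r * t))"
    using assms by (auto simp: L2w_def)
  have "integrable lborel (\<lambda>t. 2 * ((norm (g t))\<^sup>2 * exp (-2 * r * t)) + 2 * ((norm (h t))\<^sup>2 * exp (-2 * r * t)))"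
    using gi hi by auto
  then have "integrable lborel (\<lambda>t. (norm (g t - h t))\<^sup>2 * exp (-2 * r * t))"
  proof (rule Bochner_Integration.integrable_bound)
    show "(\<lambda>t. (norm (g t - h t))\<^sup>2 * exp (-2 * r * t)) \<in> borel_measurable lborel"
      using gm hm by measurable
    show "AE x in lborel. norm ((norm (g x - h x))\<^sup>2 * exp (- 2 * r * x))
        \<le> norm (2 * ((norm (g x))\<^sup>2 * exp (- 2 * r * x)) + 2 * ((norm (h x))\<^sup>2 * exp (- 2 * r * x)))"
    proof (rule AE_I2)
      fix x
      have "(norm (g x - h x))\<^sup>2 \<le> (norm (g x) + norm (h x))\<^sup>2"
        by (intro power_mono norm_triangle_ineq4) auto
      also have "\<dots> \<le> 2 * (norm (g x))\<^sup>2 + 2 * (norm (h x))\<^sup>2"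
        by (rule sq2)
      finally have "(norm (g x - h x))\<^sup>2 * exp (- 2 * r * x) \<le> (2 * (norm (g x))\<^sup>2 + 2 * (norm (h x))\<^sup>2) * exp (- 2 * r * x)"
        by (intro mult_right_mono) auto
      then show "norm ((norm (g x - h x))\<^sup>2 * exp (- 2 * r * x))
        \<le> norm (2 * ((norm (g x))\<^sup>2 * exp (- 2 * r * x)) + 2 * ((norm (h x))\<^sup>2 * exp (- 2 * r * x)))"
        by (simp add: algebra_simps)
    qed
  qed
  then show ?thesis using gm hm by (auto simp: L2w_def)
qed

lemma Cc_inf_L2w:
  fixes \<phi> :: "real \<Rightarrow> 'a::{banach,second_countable_topology}"
  assumes "\<phi> \<in> Cc_inf"
  shows "\<phi> \<in> L2w r"
proof -
  have D: "\<forall>k t. (vderiv ^^ k) \<phi> differentiable (at t)" and S: "compact (closure {t. \<phi> t \<noteq> 0})"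
    using assms unfolding Cc_inf_def by auto
  have d: "\<And>t. \<phi> differentiable (at t)"
    using D by (metis funpow_0 id_apply)
  have c: "continuous_on UNIV \<phi>"
    using d by (simp add: continuous_at_imp_continuous_on differentiable_imp_continuous_within)
  have m: "\<phi> \<in> borel_measurable lborel"
    using c by (simp add: borel_measurable_continuous_onI)
  define S' where "S' = closure {t. \<phi> t \<noteq> 0}"
  have "continuous_on S' (\<lambda>t. (norm (\<phi> t))\<^sup>2 * exp (-2 * r * t))"
    by (intro continuous_intros continuous_on_subset[OF c]) auto
  then have I: "integrable lborel (\<lambda>t. indicator S' t *\<^sub>R ((norm (\<phi> t))\<^sup>2 * exp (-2 * r * t)))"
    using S unfolding S'_def[symmetric] by (rule borel_integrable_compact[rotated])
  have z: "\<phi> t = 0" if "t \<notin> S'" for t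
    using that closure_subset[of "{t. \<phi> t \<noteq> 0}"] unfolding S'_def by blast
  have E: "(\<lambda>t. indicator S' t *\<^sub>R ((norm (\<phi> t))\<^sup>2 * exp (-2 * r * t))) = (\<lambda>t. (norm (\<phi> t))\<^sup>2 * exp (-2 * r * t))"
  proof (rule ext)
    fix t show "indicator S' t *\<^sub>R ((norm (\<phi> t))\<^sup>2 * exp (-2 * r * t)) = (norm (\<phi> t))\<^sup>2 * exp (-2 * r * t)"
      by (cases "t \<in> S'") (auto simp: z)
  qed
  have "integrable lborel (\<lambda>t. (norm (\<phi> t))\<^sup>2 * exp (-2 * r * t))" using I unfolding E .
  then show ?thesis using m by (simp add: L2w_def)
qed

theorem proposition6p1:
  fixes \<rho>\<^sub>0 :: real and y\<^sub>0 :: "complex ^ 'n"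
    and f :: "real \<Rightarrow> complex ^ 'n \<Rightarrow> complex ^ 'n"
  assumes "\<rho>\<^sub>0 > 0"
    and "\<forall>i. Im (y\<^sub>0 $ i) = 0"
    and "continuous_on ({0<..} \<times> UNIV) (\<lambda>(t, y). f t y)"
    and "\<exists>c \<ge> 0. \<forall>t > 0. \<forall>y1 y2. norm (f t y1 - f t y2) \<le> c * norm (y1 - y2)"
    and "(\<lambda>t. f t 0) \<in> L2w_pos \<rho>\<^sub>0"
  shows "eventually_Lip00 \<rho>\<^sub>0
           (\<lambda>\<phi> t. (\<lambda>t y. if t > 0 then f t y else 0) t (\<phi> t + y\<^sub>0))"
proof -
  obtain c where c0: "c \<ge> 0" and lip: "\<And>t y1 y2. t > 0 \<Longrightarrow> norm (f t y1 - f t y2) \<le> c * norm (y1 - y2)"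
    using assms(4) by blast
  define F where "F = (\<lambda>(\<phi>::real \<Rightarrow> complex ^ 'n) t. (\<lambda>t y. if t > 0 then f t y else 0) t (\<phi> t + y\<^sub>0))"
  define H where "H = (\<lambda>p::real \<times> (complex ^ 'n). indicator ({0<..} \<times> UNIV) p *\<^sub>R (\<lambda>(t, y). f t y) p)"
  have Hm: "H \<in> borel_measurable borel"
    unfolding H_def
    by (rule borel_measurable_continuous_on_indicator[OF _ assms(3)]) (rule borel_open, rule open_Times, auto)
  have HF: "F g = (\<lambda>t. H (t, g t + y\<^sub>0))" for g
    by (auto simp: F_def H_def indicator_def fun_eq_iff)
  have f0m: "set_borel_measurable lborel {0<..} (\<lambda>t. f t 0)"
   and f0i: "set_integrable lborel {0<..} (\<lambda>t. (norm (f t 0))\<^sup>2 * exp (-2 * \<rho>\<^sub>0 * t))"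
    using assms(5) by (auto simp: L2w_pos_def)
  have FL: "F g \<in> L2w \<rho>" if g: "g \<in> L2w \<rho>" and r: "\<rho> \<ge> \<rho>\<^sub>0" for g \<rho>
  proof -
    have gm: "g \<in> borel_measurable lborel"
     and gi: "integrable lborel (\<lambda>t. (norm (g t))\<^sup>2 * exp (-2 * \<rho> * t))"
      using g by (auto simp: L2w_def)
    have Fm: "F g \<in> borel_measurable lborel"
    proof -
      have "(\<lambda>t. (t, g t + y\<^sub>0)) \<in> lborel \<rightarrow>\<^sub>M (borel \<Otimes>\<^sub>M borel)"
        using gm by measurable
      then have "(\<lambda>t. (t, g t + y\<^sub>0)) \<in> lborel \<rightarrow>\<^sub>M borel"
        by (simp add: borel_prod)
      from measurable_compose[OF this Hm] show ?thesis by (simp add: HF)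
    qed
    have i1: "integrable lborel (\<lambda>t. indicator {0<..} t * ((norm (f t 0))\<^sup>2 * exp (-2 * \<rho>\<^sub>0 * t)))"
      using f0i by (simp add: set_integrable_def)
    have i3: "integrable lborel (\<lambda>t. indicator {0<..} t * exp (-2 * \<rho> * t))"
      using exp_weight_int assms(1) r by auto
    define B where "B = (\<lambda>t. 3 * (indicator {0<..} t * ((norm (f t 0))\<^sup>2 * exp (-2 * \<rho>\<^sub>0 * t)))
         + 3 * c\<^sup>2 * ((norm (g t))\<^sup>2 * exp (-2 * \<rho> * t))
         + 3 * c\<^sup>2 * (norm y\<^sub>0)\<^sup>2 * (indicator {0<..} t * exp (-2 * \<rho> * t)))"
    have Bi: "integrable lborel B" unfolding B_def using i1 gi i3 by auto
    have "integrable lborel (\<lambda>t. (norm (F g t))\<^sup>2 * exp (-2 * \<rho> * t))"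
      using Bi
    proof (rule Bochner_Integration.integrable_bound)
      show "(\<lambda>t. (norm (F g t))\<^sup>2 * exp (-2 * \<rho> * t)) \<in> borel_measurable lborel"
        using Fm by measurable
      show "AE x in lborel. norm ((norm (F g x))\<^sup>2 * exp (- 2 * \<rho> * x)) \<le> norm (B x)"
      proof (rule AE_I2)
        fix t
        have Bnn: "0 \<le> B t" unfolding B_def by (auto intro!: add_nonneg_nonneg mult_nonneg_nonneg)
        show "norm ((norm (F g t))\<^sup>2 * exp (- 2 * \<rho> * t)) \<le> norm (B t)"
        proof (cases "t > 0")
          case False
          then show ?thesis using Bnn by (simp add: F_def)
        next
          case True
          have "norm (F g t) \<le> norm (f t 0) + c * norm (g t) + c * norm y\<^sub>0"
          proof -
            have "norm (F g t) \<le> norm (f t 0) + norm (f t (g t + y\<^sub>0) - f t 0)"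
              using True by (simp add: F_def norm_triangle_sub)
            also have "\<dots> \<le> norm (f t 0) + c * norm (g t + y\<^sub>0)"
              using lip[OF True, of "g t + y\<^sub>0" 0] by simp
            also have "\<dots> \<le> norm (f t 0) + c * (norm (g t) + norm y\<^sub>0)"
              using c0 by (intro add_left_mono mult_left_mono norm_triangle_ineq) auto
            finally show ?thesis by (simp add: algebra_simps)
          qed
          then have "(norm (F g t))\<^sup>2 \<le> (norm (f t 0) + c * norm (g t) + c * norm y\<^sub>0)\<^sup>2"
            by (intro power_mono) auto
          also have "\<dots> \<le> 3 * (norm (f t 0))\<^sup>2 + 3 * c\<^sup>2 * (norm (g t))\<^sup>2 + 3 * c\<^sup>2 * (norm y\<^sub>0)\<^sup>2"
            using sq3[of "norm (f t 0)" "c * norm (g t)" "c * norm y\<^sub>0"]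
            by (simp add: power_mult_distrib)
          finally have A: "(norm (F g t))\<^sup>2 * exp (- 2 * \<rho> * t)
              \<le> (3 * (norm (f t 0))\<^sup>2 + 3 * c\<^sup>2 * (norm (g t))\<^sup>2 + 3 * c\<^sup>2 * (norm y\<^sub>0)\<^sup>2) * exp (- 2 * \<rho> * t)"
            by (intro mult_right_mono) auto
          have E: "exp (- 2 * \<rho> * t) \<le> exp (- 2 * \<rho>\<^sub>0 * t)"
            using True r by (simp add: mult_right_mono)
          have "3 * (norm (f t 0))\<^sup>2 * exp (- 2 * \<rho> * t) \<le> 3 * (norm (f t 0))\<^sup>2 * exp (- 2 * \<rho>\<^sub>0 * t)"
            using E by (intro mult_left_mono) auto
          then have "(norm (F g t))\<^sup>2 * exp (- 2 * \<rho> * t) \<le> B t"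
            using A True unfolding B_def by (simp add: algebra_simps)
          then show ?thesis using Bnn by simp
        qed
      qed
    qed
    then show ?thesis using Fm by (simp add: L2w_def)
  qed
  have Lip: "L2w_norm \<rho> (\<lambda>t. F g t - F h t) \<le> c * L2w_norm \<rho> (\<lambda>t. g t - h t)"
    if g: "g \<in> L2w \<rho>" and h: "h \<in> L2w \<rho>" for g h \<rho>
  proof -
    have di: "integrable lborel (\<lambda>t. (norm (g t - h t))\<^sup>2 * exp (-2 * \<rho> * t))"
      using L2w_diff[OF g h] by (simp add: L2w_def)
    have pw: "(norm (F g t - F h t))\<^sup>2 * exp (-2 * \<rho> * t) \<le> c\<^sup>2 * ((norm (g t - h t))\<^sup>2 * exp (-2 * \<rho> * t))" for t
    proof (cases "t > 0")
      case False then show ?thesis by (simp add: F_def)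
    next
      case True
      have "norm (F g t - F h t) \<le> c * norm (g t - h t)"
        using lip[OF True, of "g t + y\<^sub>0" "h t + y\<^sub>0"] True by (simp add: F_def)
      then have "(norm (F g t - F h t))\<^sup>2 \<le> (c * norm (g t - h t))\<^sup>2"
        by (intro power_mono) auto
      then show ?thesis by (simp add: power_mult_distrib mult.assoc[symmetric])
    qed
    have "(\<integral>t. (norm (F g t - F h t))\<^sup>2 * exp (-2 * \<rho> * t) \<partial>lborel)
        \<le> (\<integral>t. c\<^sup>2 * ((norm (g t - h t))\<^sup>2 * exp (-2 * \<rho> * t)) \<partial>lborel)"
      by (rule integral_mono') (use di pw in auto)
    also have "\<dots> = c\<^sup>2 * (\<integral>t. (norm (g t - h t))\<^sup>2 * exp (-2 * \<rho> * t) \<partial>lborel)"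
      by simp
    finally have "sqrt (\<integral>t. (norm (F g t - F h t))\<^sup>2 * exp (-2 * \<rho> * t) \<partial>lborel)
        \<le> sqrt (c\<^sup>2 * (\<integral>t. (norm (g t - h t))\<^sup>2 * exp (-2 * \<rho> * t) \<partial>lborel))"
      by (rule real_sqrt_le_mono)
    then show ?thesis using c0 by (simp add: L2w_norm_def real_sqrt_mult)
  qed
  have main: "(\<forall>\<phi>\<in>Cc_inf. F \<phi> \<in> L2w \<rho>) \<and> (\<exists>F\<rho>. (\<forall>g\<in>L2w \<rho>. F\<rho> g \<in> L2w \<rho>) \<and>
            (\<forall>\<phi>\<in>Cc_inf. AE t in lborel. F\<rho> \<phi> t = F \<phi> t) \<and>
            (\<forall>g\<in>L2w \<rho>. \<forall>h\<in>L2w \<rho>. L2w_norm \<rho> (\<lambda>t. F\<rho> g t - F\<rho> h t) \<le> c * L2w_norm \<rho> (\<lambda>t. g t - h t)))"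
    if r: "\<rho>\<^sub>0 \<le> \<rho>" for \<rho>
  proof (intro conjI ballI exI[of _ F])
    fix \<phi> :: "real \<Rightarrow> complex ^ 'n" assume "\<phi> \<in> Cc_inf"
    then show "F \<phi> \<in> L2w \<rho>" using FL r Cc_inf_L2w by blast
  next
    fix g :: "real \<Rightarrow> complex ^ 'n" assume "g \<in> L2w \<rho>" then show "F g \<in> L2w \<rho>" using FL r by blast
  next
    fix \<phi> :: "real \<Rightarrow> complex ^ 'n" show "AE t in lborel. F \<phi> t = F \<phi> t" by simp
  next
    fix g h :: "real \<Rightarrow> complex ^ 'n" assume "g \<in> L2w \<rho>" "h \<in> L2w \<rho>"
    then show "L2w_norm \<rho> (\<lambda>t. F g t - F h t) \<le> c * L2w_norm \<rho> (\<lambda>t. g t - h t)" by (rule Lip)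
  qed
  show ?thesis
    unfolding eventually_Lip00_def F_def[symmetric] using main by blast
qed

end
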